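(* For all positive integers $a,b,c,d$ and every positive integer $t$, $$i((a,b,c,d),t)+i((b,a,d,c),t)=F(a+c,b+d,0,t)+F(a,b,0,t)\,F(c,d,0,t).$$
   Context: For $S,T\subseteq[n]$, write $T\le S$ if $|T|=|S|$ and the $i$-th smallest element of $T$ is at most the $i$-th smallest element of $S$ for each $i$. The Schubert matroid $\mathrm{SM}_n(S)$ is the matroid on $[n]$ with bases $\{T\subseteq[n]:T\le S\}$; $i(M,t)$ is the number of lattice points in the $t$-th dilate of the matroid polytope $\mathrm{conv}\{\sum_{b\in B}e_b: B\text{ a basis of }M\}$. For a sequence $r=(r_1,\dots,r_{2m})$ of integers with $r_1\ge0$, $r_i>0$ for $i\ge2$, let $n=\sum r_i$ and let $S\subseteq[n]$ have indicator vector $(0^{r_1},1^{r_2},\dots,0^{r_{2m-1}},1^{r_{2m}})$ ($x^p$ = $p$ consecutive copies of $x$); $i(r,t):=i(\mathrm{SM}_n(S),t)$. For integers $a,b\ge0$ with $a+b\ge1$, $c\in\mathbb Z$, $t\ge0$: $F(a,b,c,t)=\sum_{j=0}^{a+b}(-1)^j\binom{a+b}{j}\binom{(t+1)(b-j)+a+c-1}{a+b-1}$, with $\binom00=1$ and $\binom NK=0$ if $K<0$ or $N<K$. *)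

theory Defs
  imports "HOL-Analysis.Analysis"
begin

(* Vectors in R^n are modelled as functions nat => real, coordinates indexed by [n] = {1..n}. *)

definition indvec :: "nat set \<Rightarrow> (nat \<Rightarrow> real)" where
  "indvec B = (\<lambda>i. if i \<in> B then 1 else 0)"

definition conv_hull_fin :: "(nat \<Rightarrow> real) set \<Rightarrow> (nat \<Rightarrow> real) set" where
  "conv_hull_fin V = {x. \<exists>\<mu>. (\<forall>v\<in>V. 0 \<le> \<mu> v) \<and> (\<Sum>v\<in>V. \<mu> v) = 1 \<and>
                          (\<forall>i. x i = (\<Sum>v\<in>V. \<mu> v * v i))}"

definition matroid_polytope :: "nat set set \<Rightarrow> (nat \<Rightarrow> real) set" where
  "matroid_polytope Bs = conv_hull_fin (indvec ` Bs)"

definition ehr :: "nat \<Rightarrow> nat set set \<Rightarrow> nat \<Rightarrow> nat" where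
  "ehr n Bs t = card {x :: nat \<Rightarrow> int. (\<forall>i. i \<notin> {1..n} \<longrightarrow> x i = 0) \<and>
      (\<exists>y \<in> matroid_polytope Bs. \<forall>i. real_of_int (x i) = real t * y i)}"

definition gale_le :: "nat set \<Rightarrow> nat set \<Rightarrow> bool" where
  "gale_le T S \<longleftrightarrow> card T = card S \<and>
     (\<forall>i < card S. sorted_list_of_set T ! i \<le> sorted_list_of_set S ! i)"

definition schubert_bases :: "nat \<Rightarrow> nat set \<Rightarrow> nat set set" where
  "schubert_bases n S = {T. T \<subseteq> {1..n} \<and> gale_le T S}"

(* indicator word (0^{r_1}, 1^{r_2}, 0^{r_3}, ...) : block j (0-indexed) has entry odd j *)
definition rword :: "nat list \<Rightarrow> bool list" where
  "rword r = concat (map (\<lambda>j. replicate (r ! j) (odd j)) [0..<length r])"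

definition rset :: "nat list \<Rightarrow> nat set" where
  "rset r = {k. 1 \<le> k \<and> k \<le> length (rword r) \<and> rword r ! (k - 1)}"

definition ir :: "nat list \<Rightarrow> nat \<Rightarrow> nat" where
  "ir r t = ehr (sum_list r) (schubert_bases (sum_list r) (rset r)) t"

definition binz :: "int \<Rightarrow> int \<Rightarrow> int" where
  "binz N K = (if K < 0 \<or> N < K then 0 else int (nat N choose nat K))"

definition Ffun :: "nat \<Rightarrow> nat \<Rightarrow> int \<Rightarrow> nat \<Rightarrow> int" where
  "Ffun a b c t = (\<Sum>j = 0..a + b. (-1) ^ j * int ((a + b) choose j) *
      binz ((int t + 1) * (int b - int j) + int a + c - 1) (int a + int b - 1))"

end

theory Submission
  imports Defs
begin


lemma rword4: "rword [a,b,c,d] = replicate a False @ replicate b True @ replicate c False @ replicate d True"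
  by (simp add: rword_def upt_rec)
lemma rset4: "rset [a,b,c,d] = {a+1..a+b} \<union> {a+b+c+1..a+b+c+d}"
  unfolding rset_def rword4
  by (auto simp: nth_append split: if_splits)

lemma sorted_gap:
  assumes "sorted_wrt (<) (xs::nat list)" "i \<le> j" "j < length xs"
  shows "xs!i + (j - i) \<le> xs!j"
  using assms(2,3)
proof (induction j)
  case 0 then show ?case by simp
next
  case (Suc j)
  show ?case
  proof (cases "i = Suc j")
    case True then show ?thesis by simp
  next
    case False
    then have "i \<le> j" using Suc by simp
    then have "xs!i + (j - i) \<le> xs!j" using Suc by simp
    moreover have "xs!j < xs!Suc j" using assms(1) Suc(3) sorted_wrt_nth_less by fastforce
    ultimately show ?thesis using \<open>i \<le> j\<close> by simp
  qed
qed

lemma sortedS: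
  "sorted_list_of_set ({a+1..a+b} \<union> {a+b+c+1..a+b+c+d}) = [a+1..<a+b+1] @ [a+b+c+1..<a+b+c+d+1]"
proof -
  have "set ([a+1..<a+b+1] @ [a+b+c+1..<a+b+c+d+1]) = {a+1..a+b} \<union> {a+b+c+1..a+b+c+d}"
    by auto
  moreover have "sorted ([a+1..<a+b+1] @ [a+b+c+1..<a+b+c+d+1])"
    by (auto simp: sorted_append)
  moreover have "distinct ([a+1..<a+b+1] @ [a+b+c+1..<a+b+c+d+1])"
    by auto
  ultimately show ?thesis by (metis sorted_list_of_set.idem_if_sorted_distinct)
qed

lemma gale_char:
  fixes a b c d :: nat
  assumes T: "T \<subseteq> {1..a+b+c+d}" and b: "0 < b"
  shows "gale_le T ({a+1..a+b} \<union> {a+b+c+1..a+b+c+d}) \<longleftrightarrow>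
         card T = b + d \<and> b \<le> card (T \<inter> {1..a+b})"
proof -
  define S where "S = {a+1..a+b} \<union> {a+b+c+1..a+b+c+d}"
  define xs where "xs = sorted_list_of_set T"
  have finT: "finite T" using T finite_subset by blast
  have cardS: "card S = b + d" unfolding S_def
    by (subst card_Un_disjoint) auto
  have sS: "sorted_list_of_set S ! i = (if i < b then a + 1 + i else a + b + c + 1 + (i - b))"
    if "i < b + d" for i
    using that unfolding S_def sortedS by (auto simp: nth_append)
  have len: "length xs = card T" unfolding xs_def by simp
  have ss: "sorted_wrt (<) xs" unfolding xs_def by simp
  have dist: "distinct xs" unfolding xs_def by simp
  have setxs: "set xs = T" unfolding xs_def using finT by simp
  have inT: "xs ! i \<in> T" if "i < length xs" for i using that setxs nth_mem by blast
  show ?thesis unfolding S_def[symmetric]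
  proof
    assume g: "gale_le T S"
    then have ck: "card T = b + d" unfolding gale_le_def cardS by simp
    have le: "xs ! i \<le> a + 1 + i" if "i < b" for i
    proof -
      have "i < b + d" using that by simp
      then have "xs ! i \<le> sorted_list_of_set S ! i" using g unfolding gale_le_def cardS xs_def by blast
      then show ?thesis using sS[of i] that by simp
    qed
    have "(\<lambda>i. xs ! i) ` {..<b} \<subseteq> T \<inter> {1..a+b}"
    proof
      fix y assume "y \<in> (\<lambda>i. xs ! i) ` {..<b}"
      then obtain i where i: "i < b" "y = xs ! i" by auto
      have "y \<in> T" using i inT len ck by simp
      then show "y \<in> T \<inter> {1..a+b}" using T le[OF i(1)] i by auto
    qed
    moreover have "inj_on (\<lambda>i. xs ! i) {..<b}"
      using dist len ck by (auto simp: inj_on_def nth_eq_iff_index_eq)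
    ultimately have "card {..<b} \<le> card (T \<inter> {1..a+b})"
      by (meson card_inj_on_le finT finite_Int)
    then show "card T = b + d \<and> b \<le> card (T \<inter> {1..a+b})" using ck by simp
  next
    assume h: "card T = b + d \<and> b \<le> card (T \<inter> {1..a+b})"
    have k: "length xs = b + d" using h len by simp
    have xb: "xs ! (b - 1) \<le> a + b"
    proof (rule ccontr)
      assume "\<not> xs ! (b - 1) \<le> a + b"
      then have big: "xs ! j > a + b" if "b - 1 \<le> j" "j < length xs" for j
        using sorted_gap[OF ss, of "b-1" j] that by simp
      have "T \<inter> {1..a+b} \<subseteq> (\<lambda>j. xs ! j) ` {..<b-1}"
      proof
        fix y assume y: "y \<in> T \<inter> {1..a+b}"
        then obtain j where j: "j < length xs" "y = xs ! j" using setxs by (auto simp: in_set_conv_nth)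
        then have "j < b - 1" using big[of j] y by force
        then show "y \<in> (\<lambda>j. xs ! j) ` {..<b-1}" using j by auto
      qed
      then have "card (T \<inter> {1..a+b}) \<le> card ((\<lambda>j. xs ! j) ` {..<b-1})"
        by (simp add: card_mono)
      also have "\<dots> \<le> b - 1" using card_image_le[of "{..<b-1}" "(\<lambda>j. xs ! j)"] by simp
      finally show False using h b by linarith
    qed
    have xlast: "xs ! (b + d - 1) \<le> a + b + c + d"
      using inT[of "b+d-1"] k T b by force
    have "\<forall>i < card S. xs ! i \<le> sorted_list_of_set S ! i"
    proof (intro allI impI)
      fix i assume i: "i < card S"
      show "xs ! i \<le> sorted_list_of_set S ! i"
      proof (cases "i < b")
        case True
        then have "xs ! i + (b - 1 - i) \<le> xs ! (b - 1)" using sorted_gap[OF ss, of i "b-1"] k by simp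
        then show ?thesis using sS[of i] True xb i cardS by simp
      next
        case False
        then have "xs ! i + (b + d - 1 - i) \<le> xs ! (b + d - 1)"
          using sorted_gap[OF ss, of i "b+d-1"] k i cardS by simp
        then show ?thesis using sS[of i] False xlast i cardS by simp
      qed
    qed
    then show "gale_le T S" unfolding gale_le_def xs_def using h cardS by simp
  qed
qed

lemma sum_if1: "finite S \<Longrightarrow> (\<Sum>s\<in>S. (if P s then 1 else 0::real)) = real (card {s\<in>S. P s})"
  by (simp add: sum.If_cases Int_def)

lemma sum_indvec: "finite I \<Longrightarrow> sum (indvec T) I = real (card (T \<inter> I))"
  unfolding indvec_def by (subst sum_if1) (auto simp: Int_def conj_commute)

lemma mod_close: assumes "(j::nat) mod t = j' mod t" "j \<le> j'" "j' < j + t" shows "j = j'"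
proof -
  obtain e where e: "j' = j + e" using assms(2) le_Suc_ex by blast
  have "e < t" using e assms(3) by simp
  have "t dvd (j + e) - j" using assms(1) e mod_eq_dvd_iff_nat[of j "j+e" t] by simp
  then have "t dvd e" by simp
  hence "e = 0" using \<open>e < t\<close> by (metis dvd_imp_le gr0I leD)
  then show ?thesis using e by simp
qed

lemma cnt_mod: assumes "s < t" shows "card {j::nat. j < t*q \<and> j mod t = s} = q"
proof -
  have "{j::nat. j < t*q \<and> j mod t = s} = (\<lambda>u. u*t + s) ` {..<q}"
  proof (rule set_eqI, rule iffI)
    fix j assume j: "j \<in> {j::nat. j < t*q \<and> j mod t = s}"
    then have "j = (j div t)*t + s" using div_mult_mod_eq[of j t] by simp
    moreover have "j div t < q" using j assms by (simp add: less_mult_imp_div_less mult.commute)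
    ultimately show "j \<in> (\<lambda>u. u*t + s) ` {..<q}" by blast
  next
    fix j assume "j \<in> (\<lambda>u. u*t + s) ` {..<q}"
    then obtain u where u: "u < q" "j = u*t + s" by auto
    have "u*t + s < (u+1)*t" using assms by simp
    also have "\<dots> \<le> q * t" using u mult_le_mono1[of "u+1" q t] by linarith
    finally show "j \<in> {j::nat. j < t*q \<and> j mod t = s}" using u assms by (simp add: mult.commute)
  qed
  moreover have "inj_on (\<lambda>u. u*t + s) {..<q}" using assms by (auto simp: inj_on_def)
  ultimately show ?thesis by (simp add: card_image)
qed

lemma cnt_mod_ge: assumes "s < t" "t*q \<le> c" shows "q \<le> card {j::nat. j < c \<and> j mod t = s}"
proof -
  have "{j::nat. j < t*q \<and> j mod t = s} \<subseteq> {j::nat. j < c \<and> j mod t = s}" using assms by auto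
  then have "card {j::nat. j < t*q \<and> j mod t = s} \<le> card {j::nat. j < c \<and> j mod t = s}"
    by (intro card_mono) auto
  then show ?thesis using cnt_mod[OF assms(1), of q] by simp
qed


definition boxs :: "nat set \<Rightarrow> nat \<Rightarrow> (nat \<Rightarrow> int) set" where
  "boxs I t = {x. (\<forall>i. i \<notin> I \<longrightarrow> x i = 0) \<and> (\<forall>i\<in>I. 0 \<le> x i \<and> x i \<le> int t)}"

lemma dir1:
  assumes Bs: "Bs = {T. T \<subseteq> {1..n} \<and> card T = k \<and> b \<le> card (T \<inter> {1..m})}"
  and x0: "\<forall>i. i \<notin> {1..n} \<longrightarrow> x i = 0"
  and y: "y \<in> matroid_polytope Bs" and xy: "\<forall>i. real_of_int (x i) = real t * y i"
  shows "x \<in> boxs {1..n} t \<and> (\<Sum>i\<in>{1..n}. x i) = int (t*k) \<and> int (t*b) \<le> (\<Sum>i\<in>{1..m}. x i)"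
proof -
  define V where "V = indvec ` Bs"
  have finBs: "finite Bs" unfolding Bs by (rule finite_subset[of _ "Pow {1..n}"]) auto
  have finV: "finite V" unfolding V_def using finBs by simp
  obtain \<mu> where mu0: "\<forall>v\<in>V. 0 \<le> \<mu> v" and mu1: "(\<Sum>v\<in>V. \<mu> v) = 1"
    and yv: "\<forall>i. y i = (\<Sum>v\<in>V. \<mu> v * v i)"
    using y unfolding matroid_polytope_def conv_hull_fin_def V_def by blast
  have v01: "0 \<le> v i \<and> v i \<le> 1" if "v \<in> V" for v i
    using that unfolding V_def indvec_def by auto
  have vn: "(\<Sum>i\<in>{1..n}. v i) = real k" if vV: "v \<in> V" for v
  proof -
    obtain T where T: "T \<in> Bs" "v = indvec T" using vV V_def by auto
    then have "T \<inter> {1..n} = T" "card T = k" using Bs by auto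
    then show ?thesis using T sum_indvec[of "{1..n}" T] by simp
  qed
  have vm: "(\<Sum>i\<in>{1..m}. v i) \<ge> real b" if vV: "v \<in> V" for v
  proof -
    obtain T where T: "T \<in> Bs" "v = indvec T" using vV V_def by auto
    then have "b \<le> card (T \<inter> {1..m})" using Bs by auto
    then show ?thesis using T sum_indvec[of "{1..m}" T] by simp
  qed
  have ybd: "0 \<le> y i \<and> y i \<le> 1" for i
  proof -
    have "0 \<le> (\<Sum>v\<in>V. \<mu> v * v i)" using mu0 v01 by (intro sum_nonneg) auto
    moreover have "(\<Sum>v\<in>V. \<mu> v * v i) \<le> (\<Sum>v\<in>V. \<mu> v * 1)"
      using mu0 v01 by (intro sum_mono mult_left_mono) auto
    ultimately show ?thesis using yv mu1 by simp
  qed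
  have swap: "(\<Sum>i\<in>I. y i) = (\<Sum>v\<in>V. \<mu> v * (\<Sum>i\<in>I. v i))" for I
  proof -
    have "(\<Sum>i\<in>I. y i) = (\<Sum>i\<in>I. \<Sum>v\<in>V. \<mu> v * v i)" using yv by simp
    also have "\<dots> = (\<Sum>v\<in>V. \<Sum>i\<in>I. \<mu> v * v i)" by (rule sum.swap)
    finally show ?thesis by (simp add: sum_distrib_left)
  qed
  have ysn: "(\<Sum>i\<in>{1..n}. y i) = real k"
    unfolding swap using vn mu1 by (simp add: sum_distrib_right[symmetric])
  have "(\<Sum>v\<in>V. \<mu> v * real b) \<le> (\<Sum>v\<in>V. \<mu> v * (\<Sum>i\<in>{1..m}. v i))"
    using mu0 vm by (intro sum_mono mult_left_mono) auto
  then have ysm: "(\<Sum>i\<in>{1..m}. y i) \<ge> real b"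
    unfolding swap using mu1 by (simp add: sum_distrib_right[symmetric])
  have "real_of_int (x i) \<ge> 0" for i using xy ybd[of i] by simp
  then have xge: "x i \<ge> 0" for i by simp
  have "real_of_int (x i) \<le> real t" for i using xy ybd[of i] by (simp add: mult_left_le)
  then have xle: "x i \<le> int t" for i by (metis of_int_le_iff of_int_of_nat_eq)
  have "real_of_int (\<Sum>i\<in>{1..n}. x i) = real t * real k"
    using xy ysn by (simp add: sum_distrib_left[symmetric])
  then have xn: "(\<Sum>i\<in>{1..n}. x i) = int (t*k)" by (metis of_int_eq_iff of_int_of_nat_eq of_nat_mult)
  have "real_of_int (\<Sum>i\<in>{1..m}. x i) \<ge> real t * real b"
    using xy ysm by (simp add: sum_distrib_left[symmetric] mult_left_mono)
  then have xm: "(\<Sum>i\<in>{1..m}. x i) \<ge> int (t*b)" by (metis of_int_le_iff of_int_of_nat_eq of_nat_mult)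
  show ?thesis using xn xm xge xle x0 unfolding boxs_def by auto
qed

lemma dir2:
  assumes t: "0 < t" and m: "m \<le> n"
  and Bs: "Bs = {T. T \<subseteq> {1..n} \<and> card T = k \<and> b \<le> card (T \<inter> {1..m})}"
  and x: "x \<in> boxs {1..n} t" and xsn: "(\<Sum>i\<in>{1..n}. x i) = int (t*k)"
  and xsm: "int (t*b) \<le> (\<Sum>i\<in>{1..m}. x i)"
  shows "\<exists>y \<in> matroid_polytope Bs. \<forall>i. real_of_int (x i) = real t * y i"
proof -
  define xn where "xn i = nat (x i)" for i
  define C where "C j = (\<Sum>i\<in>{1..j}. xn i)" for j
  have x0: "x i = 0" if "i \<notin> {1..n}" for i using x that unfolding boxs_def by auto
  have xb: "0 \<le> x i \<and> x i \<le> int t" if "i \<in> {1..n}" for i using x that unfolding boxs_def by auto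
  have xnt: "xn i \<le> t" if "i \<in> {1..n}" for i using xb[OF that] unfolding xn_def by (simp add: nat_le_iff)
  have CS: "C (Suc j) = C j + xn (Suc j)" for j unfolding C_def by (simp add: sum.cl_ivl_Suc)
  have Cx: "int (C j) = (\<Sum>i\<in>{1..j}. x i)" if "j \<le> n" for j
    unfolding C_def xn_def of_nat_sum using xb that by (intro sum.cong) auto
  have Cn: "C n = t * k" using Cx[of n] xsn by (metis le_refl of_nat_eq_iff)
  have Cm: "t * b \<le> C m" using Cx[of m] xsm m by (metis of_nat_le_iff)
  define A where "A s = {i \<in> {1..n}. \<exists>j. C (i-1) \<le> j \<and> j < C i \<and> j mod t = s}" for s
  have An: "A s \<subseteq> {1..n}" for s unfolding A_def by auto
  have key: "card (A s \<inter> {1..i}) = card {j. j < C i \<and> j mod t = s}" if "i \<le> n" for s i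
    using that
  proof (induction i)
    case 0
    then show ?case by (simp add: C_def)
  next
    case (Suc i)
    define W where "W = {j. C i \<le> j \<and> j < C (Suc i) \<and> j mod t = s}"
    have "{j. j < C (Suc i) \<and> j mod t = s} = {j. j < C i \<and> j mod t = s} \<union> W"
      unfolding W_def using CS by auto
    moreover have "{j. j < C i \<and> j mod t = s} \<inter> W = {}" unfolding W_def by auto
    moreover have "finite W" unfolding W_def by auto
    ultimately have c1: "card {j. j < C (Suc i) \<and> j mod t = s} = card {j. j < C i \<and> j mod t = s} + card W"
      by (simp add: card_Un_disjoint)
    have "A s \<inter> {1..Suc i} = (A s \<inter> {1..i}) \<union> (A s \<inter> {Suc i})" by auto
    moreover have "card ((A s \<inter> {1..i}) \<union> (A s \<inter> {Suc i})) = card (A s \<inter> {1..i}) + card (A s \<inter> {Suc i})"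
      by (rule card_Un_disjoint) auto
    ultimately have c2: "card (A s \<inter> {1..Suc i}) = card (A s \<inter> {1..i}) + card (A s \<inter> {Suc i})"
      by simp
    have "xn (Suc i) \<le> t" using xnt Suc.prems by simp
    have "\<forall>j\<in>W. \<forall>j'\<in>W. j = j'"
    proof (intro ballI)
      fix j j' assume jW: "j \<in> W" "j' \<in> W"
      then have "C i \<le> j" "j < C i + t" "C i \<le> j'" "j' < C i + t" "j mod t = j' mod t"
        using \<open>xn (Suc i) \<le> t\<close> CS[of i] unfolding W_def by auto
      then show "j = j'" using mod_close[of j t j'] mod_close[of j' t j] by (cases "j \<le> j'") auto
    qed
    then have Wle: "card W \<le> 1" using card_le_Suc0_iff_eq[OF \<open>finite W\<close>] by simp
    have "Suc i \<in> A s \<longleftrightarrow> W \<noteq> {}" unfolding A_def W_def using Suc.prems by auto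
    then have "card (A s \<inter> {Suc i}) = card W"
    proof (cases "W = {}")
      case True then show ?thesis using \<open>Suc i \<in> A s \<longleftrightarrow> W \<noteq> {}\<close> by simp
    next
      case False
      then have "card W > 0" using \<open>finite W\<close> card_gt_0_iff by blast
      then have "card W = 1" using Wle by simp
      then show ?thesis using False \<open>Suc i \<in> A s \<longleftrightarrow> W \<noteq> {}\<close> by simp
    qed
    then show ?case using c1 c2 Suc by simp
  qed
  have cardA: "card (A s) = k" if "s < t" for s
  proof -
    have "A s \<inter> {1..n} = A s" using An by auto
    then show ?thesis using key[of n s] Cn cnt_mod[OF that, of k] by simp
  qed
  have cardAm: "b \<le> card (A s \<inter> {1..m})" if "s < t" for s
    using key[of m s] m cnt_mod_ge[OF that Cm] by simp
  have ABs: "A s \<in> Bs" if "s < t" for s using Bs An cardA cardAm that by auto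
  have ind: "card {s \<in> {..<t}. i \<in> A s} = xn i" if i: "i \<in> {1..n}" for i
  proof -
    have Ci: "C i = C (i-1) + xn i" using CS[of "i-1"] i by simp
    have "{s \<in> {..<t}. i \<in> A s} = (\<lambda>j. j mod t) ` {C (i-1)..<C i}"
      unfolding A_def using i t by auto
    moreover have "inj_on (\<lambda>j. j mod t) {C (i-1)..<C i}"
    proof (rule inj_onI)
      fix j j' assume "j \<in> {C (i-1)..<C i}" "j' \<in> {C (i-1)..<C i}" "j mod t = j' mod t"
      moreover have "xn i \<le> t" using xnt i by simp
      ultimately show "j = j'" using Ci mod_close[of j t j'] mod_close[of j' t j] by (cases "j \<le> j'") auto
    qed
    ultimately show ?thesis using Ci by (simp add: card_image)
  qed
  define g where "g s = indvec (A s)" for s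
  have gsum: "(\<Sum>s\<in>{..<t}. g s i) = real_of_int (x i)" for i
  proof (cases "i \<in> {1..n}")
    case True
    have "(\<Sum>s\<in>{..<t}. g s i) = real (card {s \<in> {..<t}. i \<in> A s})"
      unfolding g_def indvec_def by (rule sum_if1) simp
    then show ?thesis using ind[OF True] xb[OF True] unfolding xn_def by simp
  next
    case False
    have "i \<notin> A s" for s using False An by blast
    then have "g s i = 0" for s unfolding g_def indvec_def by simp
    then show ?thesis using x0[OF False] by simp
  qed
  define V where "V = indvec ` Bs"
  have finBs: "finite Bs" unfolding Bs by (rule finite_subset[of _ "Pow {1..n}"]) auto
  have finV: "finite V" unfolding V_def using finBs by simp
  have gV: "g ` {..<t} \<subseteq> V" unfolding V_def g_def using ABs by auto
  define \<mu> where "\<mu> v = real (card {s \<in> {..<t}. g s = v}) / real t" for v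
  define y where "y i = (\<Sum>v\<in>V. \<mu> v * v i)" for i
  have "(\<Sum>v\<in>V. \<mu> v) = (\<Sum>v\<in>V. (\<Sum>s\<in>{s \<in> {..<t}. g s = v}. 1)) / real t"
    unfolding \<mu>_def by (simp add: sum_divide_distrib)
  also have "\<dots> = (\<Sum>s\<in>{..<t}. 1) / real t"
    using sum.group[OF _ finV gV, of "\<lambda>_. 1::real"] by simp
  finally have mu1: "(\<Sum>v\<in>V. \<mu> v) = 1" using t by simp
  have mu0: "\<forall>v\<in>V. 0 \<le> \<mu> v" unfolding \<mu>_def by simp
  have yi: "real t * y i = real_of_int (x i)" for i
  proof -
    have "y i = (\<Sum>v\<in>V. (\<Sum>s\<in>{s \<in> {..<t}. g s = v}. g s i)) / real t"
      unfolding y_def \<mu>_def by (simp add: sum_divide_distrib)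
    also have "\<dots> = (\<Sum>s\<in>{..<t}. g s i) / real t"
      using sum.group[OF _ finV gV, of "\<lambda>s. g s i"] by simp
    finally show ?thesis using gsum t by simp
  qed
  have "y \<in> matroid_polytope Bs"
    unfolding matroid_polytope_def conv_hull_fin_def V_def[symmetric] using mu0 mu1 y_def by blast
  then show ?thesis using yi by metis
qed

notation fps_nth (infixl "$f" 75)


definition Aser :: "nat \<Rightarrow> int fps" where
  "Aser t = Abs_fps (\<lambda>v. if v \<le> t then 1 else 0)"

definition Bser :: "int fps" where "Bser = Abs_fps (\<lambda>_. 1)"

lemma Aser_eq: "Aser t = (1 - fps_X ^ (t+1)) * Bser"
proof (rule fps_ext)
  fix n
  have e: "(1 - fps_X ^ (t+1)) * Bser = Bser - fps_X ^ (t+1) * Bser" by (simp add: algebra_simps)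
  have "(fps_X ^ (t+1) * Bser) $f n = (if n < t+1 then 0 else 1)"
    by (simp only: fps_X_power_mult_nth) (simp add: Bser_def)
  then show "Aser t $f n = ((1 - fps_X ^ (t+1)) * Bser) $f n"
    unfolding e by (simp add: Aser_def Bser_def)
qed

lemma Bser_pow: "(Bser ^ Suc N) $f s = (N + s choose s)"
proof (induction N arbitrary: s)
  case 0 then show ?case by (simp add: Bser_def)
next
  case (Suc N)
  have "(Bser ^ Suc (Suc N)) $f s = (\<Sum>i=0..s. Bser $f i * (Bser ^ Suc N) $f (s - i))"
    by (simp only: power_Suc[of Bser "Suc N"] fps_mult_nth)
  also have "\<dots> = (\<Sum>i=0..s. int (N + (s - i) choose (s - i)))" using Suc by (simp add: Bser_def)
  also have "\<dots> = (\<Sum>i=0..s. int (N + i choose i))"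
    by (subst sum.atLeastAtMost_rev) simp
  also have "\<dots> = int (\<Sum>i\<le>s. (N + i choose i))" by (simp add: atLeast0AtMost)
  also have "\<dots> = int (Suc N + s choose s)" by (subst sum_choose_lower) simp
  finally show ?case .
qed

lemma m1: "(-1::int fps)^j = fps_const ((-1)^j)"
  by (metis fps_const_neg fps_const_power fps_const_1_eq_1)

lemma pow_binom: "(1 - fps_X ^ (t+1) :: int fps) ^ N = (\<Sum>j\<le>N. fps_const ((-1)^j * int (N choose j)) * fps_X ^ ((t+1)*j))"
proof -
  have e: "(1 - fps_X ^ (t+1) :: int fps) = (- (fps_X ^ (t+1))) + 1"
    by (simp only: diff_conv_add_uminus add.commute)
  have "(1 - fps_X ^ (t+1) :: int fps) ^ N = (\<Sum>j\<le>N. of_nat (N choose j) * (- (fps_X ^ (t+1))) ^ j * 1 ^ (N - j))"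
    unfolding e by (rule binomial_ring)
  also have "\<dots> = (\<Sum>j\<le>N. fps_const ((-1)^j * int (N choose j)) * fps_X ^ ((t+1)*j))"
  proof (rule sum.cong[OF refl])
    fix j
    have "(- (fps_X ^ (t+1)) :: int fps) ^ j = (-1)^j * (fps_X ^ (t+1)) ^ j"
      by (rule power_minus)
    also have "\<dots> = fps_const ((-1)^j) * fps_X ^ ((t+1)*j)" unfolding m1 power_mult ..
    finally have p: "(- (fps_X ^ (t+1)) :: int fps) ^ j = fps_const ((-1)^j) * fps_X ^ ((t+1)*j)" .
    have o: "(of_nat (N choose j) :: int fps) = fps_const (int (N choose j))"
      by (simp only: fps_of_nat[symmetric] of_nat_id)
    show "of_nat (N choose j) * (- (fps_X ^ (t+1))) ^ j * 1 ^ (N - j) = fps_const ((-1)^j * int (N choose j)) * (fps_X ^ ((t+1)*j) :: int fps)"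
      unfolding p o power_one mult_1_right mult.assoc[symmetric] fps_const_mult
      by (simp only: mult.commute)
  qed
  finally show ?thesis .
qed

lemma Aser_pow:
  assumes "0 < N"
  shows "(Aser t ^ N) $f s = (\<Sum>j=0..N. (-1)^j * int (N choose j) *
            binz (int s - int ((t+1)*j) + int N - 1) (int N - 1))"
proof -
  obtain N' where N: "N = Suc N'" using assms not0_implies_Suc by blast
  have "Aser t ^ N = (\<Sum>j\<le>N. fps_const ((-1)^j * int (N choose j)) * (fps_X ^ ((t+1)*j) * Bser ^ N))"
    unfolding Aser_eq power_mult_distrib pow_binom by (simp add: sum_distrib_right mult.assoc)
  then have "(Aser t ^ N) $f s = (\<Sum>j\<le>N. (-1)^j * int (N choose j) * (if s < (t+1)*j then 0 else (Bser ^ N) $f (s - (t+1)*j)))"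
    by (simp only: fps_sum_nth fps_mult_left_const_nth fps_X_power_mult_nth mult.assoc)
  also have "\<dots> = (\<Sum>j=0..N. (-1)^j * int (N choose j) *
            binz (int s - int ((t+1)*j) + int N - 1) (int N - 1))"
    unfolding atLeast0AtMost
  proof (rule sum.cong[OF refl])
    fix j
    have "(if s < (t+1)*j then 0 else (Bser ^ N) $f (s - (t+1)*j)) = binz (int s - int ((t+1)*j) + int N - 1) (int N - 1)"
    proof (cases "s < (t+1)*j")
      case True
      then have "int s - int ((t+1)*j) + int N - 1 < int N - 1" by linarith
      then show ?thesis using True by (simp add: binz_def)
    next
      case False
      define u where "u = s - (t+1)*j"
      have e1: "int s - int ((t+1)*j) + int N - 1 = int (N' + u)" using False N unfolding u_def by (simp add: of_nat_diff)
      have e2: "int N - 1 = int N'" using N by simp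
      have e3: "(N' + u choose u) = (N' + u choose N')" using binomial_symmetric[of u "N'+u"] by simp
      have "(if s < (t+1)*j then 0 else (Bser ^ N) $f (s - (t+1)*j)) = (Bser ^ Suc N') $f u"
        using False N unfolding u_def by simp
      also have "\<dots> = int (N' + u choose N')" unfolding Bser_pow e3 ..
      also have "\<dots> = binz (int (N' + u)) (int N')" unfolding binz_def by (simp del: of_nat_add)
      finally show ?thesis unfolding e1 e2 .
    qed
    then show "(-1)^j * int (N choose j) * (if s < (t+1)*j then 0 else (Bser ^ N) $f (s - (t+1)*j)) =
       (-1)^j * int (N choose j) * binz (int s - int ((t+1)*j) + int N - 1) (int N - 1)" by simp
  qed
  finally show ?thesis .
qed

lemma Ffun_eq: assumes "0 < a + b" shows "Ffun a b 0 t = (Aser t ^ (a+b)) $f (t*b)"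
  unfolding Aser_pow[OF assms] Ffun_def
proof (rule sum.cong[OF refl])
  fix j
  have eq: "(int t + 1) * (int b - int j) + int a + 0 - 1 = int (t*b) - int ((t+1)*j) + int (a+b) - 1"
    by (simp add: algebra_simps)
  have eq2: "int a + int b - 1 = int (a+b) - 1" by simp
  then show "(-1)^j * int ((a+b) choose j) * binz ((int t + 1) * (int b - int j) + int a + 0 - 1) (int a + int b - 1)
    = (-1)^j * int ((a+b) choose j) * binz (int (t*b) - int ((t+1)*j) + int (a+b) - 1) (int (a+b) - 1)"
    by (simp only: eq eq2)
qed


lemma finite_boxs: assumes "finite I" shows "finite (boxs I t)"
proof -
  have "boxs I t \<subseteq> (\<lambda>f i. if i \<in> I then f i else 0) ` (PiE I (\<lambda>_. {0..int t}))"
  proof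
    fix x assume x: "x \<in> boxs I t"
    then have "x = (\<lambda>i. if i \<in> I then restrict x I i else 0)" unfolding boxs_def by auto
    moreover have "restrict x I \<in> PiE I (\<lambda>_. {0..int t})" using x unfolding boxs_def by auto
    ultimately show "x \<in> (\<lambda>f i. if i \<in> I then f i else 0) ` (PiE I (\<lambda>_. {0..int t}))" by blast
  qed
  moreover have "finite (PiE I (\<lambda>_. {0..int t}))" using assms by (simp add: finite_PiE)
  ultimately show ?thesis using finite_subset by blast
qed

lemma count_box:
  assumes "finite I"
  shows "int (card {x \<in> boxs I t. sum x I = int s}) = (Aser t ^ card I) $f s"
  using assms
proof (induction I arbitrary: s rule: finite_induct)
  case empty
  have "{x \<in> boxs {} t. sum x {} = int s} = (if s = 0 then {\<lambda>_. 0} else {})"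
    by (auto simp: boxs_def fun_eq_iff)
  then show ?case by simp
next
  case (insert i I)
  define X where "X J s = {x \<in> boxs J t. sum x J = int s}" for J s
  define V where "V = {v. v \<le> t \<and> v \<le> s}"
  have bij: "bij_betw (\<lambda>x. (nat (x i), x(i := 0))) (X (insert i I) s) (SIGMA v:V. X I (s - v))"
  proof (rule bij_betw_byWitness[where f' = "\<lambda>(v, z). z(i := int v)"])
    show "\<forall>x\<in>X (insert i I) s. (\<lambda>(v, z). z(i := int v)) (nat (x i), x(i := 0)) = x"
      unfolding X_def boxs_def by (auto simp: fun_eq_iff)
    show "\<forall>y\<in>(SIGMA v:V. X I (s - v)). (\<lambda>x. (nat (x i), x(i := 0))) ((\<lambda>(v, z). z(i := int v)) y) = y"
      unfolding X_def boxs_def using insert.hyps by (auto simp: fun_eq_iff)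
    show "(\<lambda>x. (nat (x i), x(i := 0))) ` X (insert i I) s \<subseteq> (SIGMA v:V. X I (s - v))"
    proof
      fix y assume "y \<in> (\<lambda>x. (nat (x i), x(i := 0))) ` X (insert i I) s"
      then obtain x where x: "x \<in> X (insert i I) s" and y: "y = (nat (x i), x(i := 0))" by auto
      have xb: "x \<in> boxs (insert i I) t" and xs: "sum x (insert i I) = int s" using x X_def by auto
      have ss: "sum x (insert i I) = x i + sum x I" using insert.hyps by simp
      have "sum x I \<ge> 0" using xb unfolding boxs_def by (auto intro: sum_nonneg)
      have xi: "0 \<le> x i" "x i \<le> int t" using xb unfolding boxs_def by auto
      have "nat (x i) \<in> V" unfolding V_def using xi xs ss \<open>sum x I \<ge> 0\<close> by auto
      moreover have "x(i := 0) \<in> boxs I t" using xb unfolding boxs_def by auto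
      moreover have "sum (x(i := 0)) I = sum x I" using insert.hyps by (intro sum.cong) auto
      moreover have "sum x I = int (s - nat (x i))" using xs ss xi \<open>sum x I \<ge> 0\<close> by simp
      ultimately show "y \<in> (SIGMA v:V. X I (s - v))" unfolding y X_def by simp
    qed
    show "(\<lambda>(v, z). z(i := int v)) ` (SIGMA v:V. X I (s - v)) \<subseteq> X (insert i I) s"
    proof
      fix y assume "y \<in> (\<lambda>(v, z). z(i := int v)) ` (SIGMA v:V. X I (s - v))"
      then obtain v z where v: "v \<in> V" and z: "z \<in> X I (s - v)" and y: "y = z(i := int v)" by auto
      have zb: "z \<in> boxs I t" and zs: "sum z I = int (s - v)" using z X_def by auto
      have "y \<in> boxs (insert i I) t" using zb v unfolding y boxs_def V_def by auto
      moreover have "sum (z(i := int v)) I = sum z I" using insert.hyps by (intro sum.cong) auto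
      then have "sum y (insert i I) = int v + sum z I"
        using insert.hyps unfolding y by simp
      ultimately show "y \<in> X (insert i I) s" using zs v unfolding X_def V_def by auto
    qed
  qed
  have finX: "finite (X J s')" if "finite J" for J s' using finite_boxs[OF that] unfolding X_def by simp
  have "card (X (insert i I) s) = card (SIGMA v:V. X I (s - v))" using bij by (rule bij_betw_same_card)
  also have "\<dots> = (\<Sum>v\<in>V. card (X I (s - v)))"
    using finX[OF insert.hyps(1)] by (intro card_SigmaI) (auto simp: V_def)
  finally have "int (card (X (insert i I) s)) = (\<Sum>v\<in>V. (Aser t ^ card I) $f (s - v))"
    using insert.IH unfolding X_def by simp
  also have "\<dots> = (\<Sum>v=0..s. Aser t $f v * (Aser t ^ card I) $f (s - v))"
  proof -
    have "(\<Sum>v=0..s. Aser t $f v * (Aser t ^ card I) $f (s - v)) = (\<Sum>v=0..s. if v \<le> t then (Aser t ^ card I) $f (s - v) else 0)"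
    proof (rule sum.cong[OF refl])
      fix v have "Aser t $f v = (if v \<le> t then 1 else 0)" by (simp add: Aser_def)
      then show "Aser t $f v * (Aser t ^ card I) $f (s - v) = (if v \<le> t then (Aser t ^ card I) $f (s - v) else 0)"
        by simp
    qed
    also have "\<dots> = (\<Sum>v\<in>{v\<in>{0..s}. v \<le> t}. (Aser t ^ card I) $f (s - v))"
      by (rule sum.inter_filter[symmetric]) simp
    also have "{v\<in>{0..s}. v \<le> t} = V" unfolding V_def by auto
    finally show ?thesis by simp
  qed
  also have "\<dots> = (Aser t ^ card (insert i I)) $f s"
    using insert.hyps by (simp add: fps_mult_nth)
  finally show ?case unfolding X_def .
qed


lemma ir_eq:
  assumes b: "0 < b" and t: "0 < t"
  shows "ir [a,b,c,d] t = card {x \<in> boxs {1..a+b+c+d} t. sum x {1..a+b+c+d} = int (t*(b+d)) \<and> int (t*b) \<le> sum x {1..a+b}}"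
proof -
  define n where "n = a+b+c+d"
  define Bs where "Bs = {T. T \<subseteq> {1..n} \<and> card T = b + d \<and> b \<le> card (T \<inter> {1..a+b})}"
  have sb: "schubert_bases n (rset [a,b,c,d]) = Bs"
    unfolding schubert_bases_def Bs_def rset4 n_def using gale_char[OF _ b] by blast
  have m: "a + b \<le> n" unfolding n_def by simp
  have seteq: "{x :: nat \<Rightarrow> int. (\<forall>i. i \<notin> {1..n} \<longrightarrow> x i = 0) \<and>
      (\<exists>y \<in> matroid_polytope Bs. \<forall>i. real_of_int (x i) = real t * y i)}
      = {x \<in> boxs {1..n} t. sum x {1..n} = int (t*(b+d)) \<and> int (t*b) \<le> sum x {1..a+b}}"
  proof (rule set_eqI, rule iffI)
    fix x assume "x \<in> {x :: nat \<Rightarrow> int. (\<forall>i. i \<notin> {1..n} \<longrightarrow> x i = 0) \<and>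
      (\<exists>y \<in> matroid_polytope Bs. \<forall>i. real_of_int (x i) = real t * y i)}"
    then show "x \<in> {x \<in> boxs {1..n} t. sum x {1..n} = int (t*(b+d)) \<and> int (t*b) \<le> sum x {1..a+b}}"
      using dir1[OF Bs_def] by blast
  next
    fix x assume x: "x \<in> {x \<in> boxs {1..n} t. sum x {1..n} = int (t*(b+d)) \<and> int (t*b) \<le> sum x {1..a+b}}"
    then have "\<forall>i. i \<notin> {1..n} \<longrightarrow> x i = 0" unfolding boxs_def by auto
    moreover have "\<exists>y \<in> matroid_polytope Bs. \<forall>i. real_of_int (x i) = real t * y i"
      using x dir2[OF t m Bs_def] by blast
    ultimately show "x \<in> {x :: nat \<Rightarrow> int. (\<forall>i. i \<notin> {1..n} \<longrightarrow> x i = 0) \<and>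
      (\<exists>y \<in> matroid_polytope Bs. \<forall>i. real_of_int (x i) = real t * y i)}" by blast
  qed
  have sl: "sum_list [a,b,c,d] = n" unfolding n_def by simp
  have "ir [a,b,c,d] t = ehr n Bs t" unfolding ir_def sl sb ..
  also have "\<dots> = card {x \<in> boxs {1..n} t. sum x {1..n} = int (t*(b+d)) \<and> int (t*b) \<le> sum x {1..a+b}}"
    unfolding ehr_def seteq ..
  finally show ?thesis unfolding n_def .
qed

lemma split_count:
  assumes "finite I" "finite J" "I \<inter> J = {}"
  shows "card {x \<in> boxs (I \<union> J) t. sum x I = int p \<and> sum x J = int q}
       = card {x \<in> boxs I t. sum x I = int p} * card {x \<in> boxs J t. sum x J = int q}"
proof -
  define X where "X K s = {x \<in> boxs K t. sum x K = int s}" for K s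
  define r where "r (K::nat set) (x::nat\<Rightarrow>int) = (\<lambda>i. if i \<in> K then x i else (0::int))" for K x
  have sr: "sum (r K x) K = sum x K" for K x unfolding r_def by simp
  have "bij_betw (\<lambda>x. (r I x, r J x)) {x \<in> boxs (I \<union> J) t. sum x I = int p \<and> sum x J = int q} (X I p \<times> X J q)"
  proof (rule bij_betw_byWitness[where f' = "\<lambda>(y, z) i. y i + z i"])
    show "\<forall>x\<in>{x \<in> boxs (I \<union> J) t. sum x I = int p \<and> sum x J = int q}. (\<lambda>(y, z) i. y i + z i) (r I x, r J x) = x"
      using assms(3) unfolding r_def boxs_def by (auto simp: fun_eq_iff)
    show "\<forall>y\<in>X I p \<times> X J q. (\<lambda>x. (r I x, r J x)) ((\<lambda>(y, z) i. y i + z i) y) = y"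
      using assms(3) unfolding r_def boxs_def X_def by (auto simp: fun_eq_iff)
    show "(\<lambda>x. (r I x, r J x)) ` {x \<in> boxs (I \<union> J) t. sum x I = int p \<and> sum x J = int q} \<subseteq> X I p \<times> X J q"
      unfolding X_def using sr unfolding r_def boxs_def by auto
    show "(\<lambda>(y, z) i. y i + z i) ` (X I p \<times> X J q) \<subseteq> {x \<in> boxs (I \<union> J) t. sum x I = int p \<and> sum x J = int q}"
    proof
      fix x assume "x \<in> (\<lambda>(y, z) i. y i + z i) ` (X I p \<times> X J q)"
      then obtain y z where y: "y \<in> X I p" and z: "z \<in> X J q" and x: "x = (\<lambda>i. y i + z i)" by auto
      have y0: "\<forall>i. i \<notin> I \<longrightarrow> y i = 0" and z0: "\<forall>i. i \<notin> J \<longrightarrow> z i = 0"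
        using y z unfolding X_def boxs_def by auto
      have "sum z I = 0" using z0 assms(3) by (intro sum.neutral) blast
      then have "sum x I = sum y I" unfolding x by (simp add: sum.distrib)
      moreover have "sum y J = 0" using y0 assms(3) by (intro sum.neutral) blast
      then have "sum x J = sum z J" unfolding x by (simp add: sum.distrib)
      moreover have "x \<in> boxs (I \<union> J) t" using y z assms(3) unfolding x X_def boxs_def by auto
      ultimately show "x \<in> {x \<in> boxs (I \<union> J) t. sum x I = int p \<and> sum x J = int q}"
        using y z unfolding X_def by auto
    qed
  qed
  then show ?thesis unfolding X_def by (simp add: bij_betw_same_card card_cartesian_product)
qed



lemma cmp_sum:
  assumes "K \<subseteq> {1..n}"
  shows "sum (\<lambda>i. if i \<in> {1..n} then int t - x i else 0) K = int (card K) * int t - sum x K"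
proof -
  have "sum (\<lambda>i. if i \<in> {1..n} then int t - x i else 0) K = sum (\<lambda>i. int t - x i) K"
    using assms by (intro sum.cong) auto
  also have "\<dots> = int (card K) * int t - sum x K" by (simp add: sum_subtractf)
  finally show ?thesis .
qed

theorem theorem4p2:
  fixes a b c d t :: nat
  assumes "0 < a" "0 < b" "0 < c" "0 < d" "0 < t"
  shows "int (ir [a, b, c, d] t) + int (ir [b, a, d, c] t)
         = Ffun (a + c) (b + d) 0 t + Ffun a b 0 t * Ffun c d 0 t"
proof -
  define n where "n = a+b+c+d"
  define m where "m = a+b"
  define E1 where "E1 = {x \<in> boxs {1..n} t. sum x {1..n} = int (t*(b+d)) \<and> int (t*b) \<le> sum x {1..m}}"
  define E2 where "E2 = {x \<in> boxs {1..n} t. sum x {1..n} = int (t*(a+c)) \<and> int (t*a) \<le> sum x {1..m}}"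
  define E2' where "E2' = {x \<in> boxs {1..n} t. sum x {1..n} = int (t*(b+d)) \<and> sum x {1..m} \<le> int (t*b)}"
  define All where "All = {x \<in> boxs {1..n} t. sum x {1..n} = int (t*(b+d))}"
  define Eq where "Eq = {x \<in> boxs {1..n} t. sum x {1..n} = int (t*(b+d)) \<and> sum x {1..m} = int (t*b)}"
  have i1: "ir [a,b,c,d] t = card E1" unfolding E1_def n_def m_def by (rule ir_eq[OF assms(2,5)])
  have i2: "ir [b,a,d,c] t = card E2" unfolding E2_def n_def m_def using ir_eq[OF assms(1,5), of b d c]
    by (simp add: ac_simps)
  have mn: "m \<le> n" unfolding m_def n_def by simp
  define cmp where "cmp x = (\<lambda>i. if i \<in> {1..n} then int t - x i else 0)" for x :: "nat \<Rightarrow> int"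
  have cb: "cmp x \<in> boxs {1..n} t" if "x \<in> boxs {1..n} t" for x
    using that unfolding cmp_def boxs_def by auto
  have cc: "cmp (cmp x) = x" if "x \<in> boxs {1..n} t" for x
    using that unfolding cmp_def boxs_def by (auto simp: fun_eq_iff)
  have csn: "sum (cmp x) {1..n} = int n * int t - sum x {1..n}" for x
    unfolding cmp_def by (subst cmp_sum) auto
  have csm: "sum (cmp x) {1..m} = int m * int t - sum x {1..m}" for x
    unfolding cmp_def using mn by (subst cmp_sum) auto
  have "bij_betw cmp E2 E2'"
  proof (rule bij_betw_byWitness[where f' = cmp])
    show "\<forall>x\<in>E2. cmp (cmp x) = x" using cc unfolding E2_def by auto
    show "\<forall>x\<in>E2'. cmp (cmp x) = x" using cc unfolding E2'_def by auto
    have nt: "int n * int t = int (t*(a+c)) + int (t*(b+d))" unfolding n_def by (simp add: algebra_simps)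
    have mt: "int m * int t = int (t*a) + int (t*b)" unfolding m_def by (simp add: algebra_simps)
    show "cmp ` E2 \<subseteq> E2'"
    proof
      fix y assume "y \<in> cmp ` E2"
      then obtain x where x: "x \<in> E2" and y: "y = cmp x" by auto
      show "y \<in> E2'" using x cb[of x] csn[of x] csm[of x] nt mt unfolding y E2_def E2'_def by auto
    qed
    show "cmp ` E2' \<subseteq> E2"
    proof
      fix y assume "y \<in> cmp ` E2'"
      then obtain x where x: "x \<in> E2'" and y: "y = cmp x" by auto
      show "y \<in> E2" using x cb[of x] csn[of x] csm[of x] nt mt unfolding y E2_def E2'_def by auto
    qed
  qed
  then have i2': "card E2 = card E2'" by (rule bij_betw_same_card)
  have finB: "finite (boxs {1..n} t)" by (rule finite_boxs) simp
  have "card E1 + card E2' = card (E1 \<union> E2') + card (E1 \<inter> E2')"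
    by (rule card_Un_Int) (use finB in \<open>auto simp: E1_def E2'_def\<close>)
  moreover have "E1 \<union> E2' = All" unfolding E1_def E2'_def All_def by auto
  moreover have "E1 \<inter> E2' = Eq" unfolding E1_def E2'_def Eq_def by auto
  ultimately have main: "card E1 + card E2 = card All + card Eq" using i2' by simp
  have un: "{1..n} = {1..m} \<union> {m+1..n}" using mn by auto
  have dj: "{1..m} \<inter> {m+1..n} = {}" by auto
  have "Eq = {x \<in> boxs ({1..m} \<union> {m+1..n}) t. sum x {1..m} = int (t*b) \<and> sum x {m+1..n} = int (t*d)}"
  proof -
    have "sum x {1..n} = sum x {1..m} + sum x {m+1..n}" for x :: "nat \<Rightarrow> int"
      unfolding un by (rule sum.union_disjoint) auto
    then show ?thesis unfolding Eq_def un[symmetric] by (auto simp: algebra_simps)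
  qed
  then have cEq: "card Eq = card {x \<in> boxs {1..m} t. sum x {1..m} = int (t*b)} * card {x \<in> boxs {m+1..n} t. sum x {m+1..n} = int (t*d)}"
    using split_count[of "{1..m}" "{m+1..n}" t "t*b" "t*d"] by (simp only: finite_atLeastAtMost dj simp_thms)
  have fA: "int (card All) = Ffun (a + c) (b + d) 0 t"
  proof -
    have "int (card All) = (Aser t ^ card {1..n}) $f (t*(b+d))" unfolding All_def by (rule count_box) simp
    also have "card {1..n} = (a+c) + (b+d)" unfolding n_def by simp
    finally show ?thesis using Ffun_eq[of "a+c" "b+d" t] assms by simp
  qed
  have f1: "int (card {x \<in> boxs {1..m} t. sum x {1..m} = int (t*b)}) = Ffun a b 0 t"
  proof -
    have "int (card {x \<in> boxs {1..m} t. sum x {1..m} = int (t*b)}) = (Aser t ^ card {1..m}) $f (t*b)"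
      by (rule count_box) simp
    also have "card {1..m} = a + b" unfolding m_def by simp
    finally show ?thesis using Ffun_eq[of a b t] assms by simp
  qed
  have f2: "int (card {x \<in> boxs {m+1..n} t. sum x {m+1..n} = int (t*d)}) = Ffun c d 0 t"
  proof -
    have "int (card {x \<in> boxs {m+1..n} t. sum x {m+1..n} = int (t*d)}) = (Aser t ^ card {m+1..n}) $f (t*d)"
      by (rule count_box) simp
    also have "card {m+1..n} = c + d" unfolding m_def n_def by simp
    finally show ?thesis using Ffun_eq[of c d t] assms by simp
  qed
  have "int (ir [a, b, c, d] t) + int (ir [b, a, d, c] t) = int (card All) + int (card Eq)"
    unfolding i1 i2 using main by (metis of_nat_add)
  also have "\<dots> = Ffun (a + c) (b + d) 0 t + Ffun a b 0 t * Ffun c d 0 t"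
  proof -
    have "int (card Eq) = int (card {x \<in> boxs {1..m} t. sum x {1..m} = int (t*b)}) * int (card {x \<in> boxs {m+1..n} t. sum x {m+1..n} = int (t*d)})"
      unfolding cEq by (rule of_nat_mult)
    also have "\<dots> = Ffun a b 0 t * Ffun c d 0 t" unfolding f1 f2 ..
    finally have "int (card Eq) = Ffun a b 0 t * Ffun c d 0 t" .
    then show ?thesis using fA by simp
  qed
  finally show ?thesis .
qed
end
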